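(* Let $\mathcal{H}$ be a real Hilbert space, $f:\mathcal{H}\to\mathbb{R}$ $\mu$-strongly convex and $L$-smooth with $0<\mu<L<\infty$, $g:\mathcal{H}\to\mathbb{R}\cup\{+\infty\}$ convex, proper and lower semicontinuous, $q=\mu/L$, and $x^\star$ the unique minimizer of $f+g$. Let the Prox-ITEM iterates and the quantities $\mathcal{V}_k$ be as defined in the context. Then $\mathcal{V}_{k+1}\le\mathcal{V}_k$ for every $k\in\mathbb{N}_0$.
   Context: $\operatorname{Prox}^{\gamma}_g(x)=\operatorname{argmin}_z\big(g(z)+\frac{1}{2\gamma}\|x-z\|^2\big)$. Prox-ITEM from $x^0\in\mathcal{H}$: $A_0=0$, $z^0=x^0$, and for $k\ge0$: $A_{k+1}=\frac{(1+q)A_k+2(1+\sqrt{(1+A_k)(1+qA_k)})}{(1-q)^2}$, $\beta_k=\frac{A_k}{(1-q)A_{k+1}}$, $\delta_k=\sqrt{\frac{A_{k+1}}{1+qA_{k+1}}}$, $y^k=(1-\beta_k)z^k+\beta_kx^k$, $\bar z^{k+1}=(1-q\delta_k)z^k+q\delta_ky^k-\frac{\delta_k}{L}\nabla f(y^k)$, $z^{k+1}=\operatorname{Prox}^{\delta_k/L}_g(\bar z^{k+1})$, $x^{k+1}=y^k-\frac1L\nabla f(y^k)-\frac1{\delta_k}(\bar z^{k+1}-z^{k+1})$. Define $\mathcal{I}_f(x,y)=f(x)-f(y)-\langle\nabla f(y),x-y\rangle-\frac{\mu}{2}\|x-y\|^2-\frac{1}{2(L-\mu)}\|\nabla f(x)-\nabla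 f(y)-\mu(x-y)\|^2$ and $\mathcal{I}_g(x,y,s)=g(x)-g(y)-\langle s,x-y\rangle$. Let $s_g^k=L\delta_{k-1}^{-1}(\bar z^k-z^k)$ for $k\ge1$ (so $s_g^k\in\partial g(z^k)$), $s_g^\star=-\nabla f(x^\star)$, and $\sigma_k=\sqrt{(1+A_k)(1+qA_k)}$. For $k\in\mathbb{N}_0$, $$\mathcal{V}_k=(1-q)A_k\mathcal{I}_f(y^{k-1},x^\star)+qA_k\mathcal{I}_g(x^\star,z^k,s_g^k)+(qA_k+1-\sigma_k)\mathcal{I}_g(z^k,x^\star,s_g^\star)+\frac{A_k}{2L}\|s_g^k-s_g^\star\|^2+(L+\mu A_k)\|z^k-x^\star\|^2,$$ with the conventions $y^{-1}=y^0$, $s_g^0=s_g^1$, $0\cdot(\pm\infty)=0$. *)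

theory Defs
  imports "HOL-Analysis.Analysis" "HOL-Library.Extended_Real"
begin

definition strongly_convex :: "real \<Rightarrow> ('a::real_inner \<Rightarrow> real) \<Rightarrow> bool" where
  "strongly_convex \<mu> f \<longleftrightarrow> (\<forall>x y t. 0 \<le> t \<and> t \<le> 1 \<longrightarrow>
     f ((1 - t) *\<^sub>R x + t *\<^sub>R y) \<le> (1 - t) * f x + t * f y - \<mu> / 2 * t * (1 - t) * (norm (x - y))\<^sup>2)"

text \<open>Extended-valued functions g : H -> R union {+infinity}, modelled as ereal-valued functions never -infinity.\<close>
definition ext_convex :: "('a::real_vector \<Rightarrow> ereal) \<Rightarrow> bool" where
  "ext_convex g \<longleftrightarrow> (\<forall>x y t. 0 \<le> t \<and> t \<le> 1 \<longrightarrow>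
     g ((1 - t) *\<^sub>R x + t *\<^sub>R y) \<le> ereal (1 - t) * g x + ereal t * g y)"

definition ext_proper :: "('a \<Rightarrow> ereal) \<Rightarrow> bool" where
  "ext_proper g \<longleftrightarrow> (\<forall>x. g x \<noteq> -\<infinity>) \<and> (\<exists>x. g x \<noteq> \<infinity>)"

definition ext_lsc :: "('a::topological_space \<Rightarrow> ereal) \<Rightarrow> bool" where
  "ext_lsc g \<longleftrightarrow> (\<forall>c. closed {x. g x \<le> c})"

definition prox :: "real \<Rightarrow> ('a::real_inner \<Rightarrow> ereal) \<Rightarrow> 'a \<Rightarrow> 'a" where
  "prox \<gamma> g x = (THE z. \<forall>w. g z + ereal (1 / (2 * \<gamma>) * (norm (x - z))\<^sup>2)
                              \<le> g w + ereal (1 / (2 * \<gamma>) * (norm (x - w))\<^sup>2))"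

fun itemA :: "real \<Rightarrow> nat \<Rightarrow> real" where
  "itemA q 0 = 0"
| "itemA q (Suc k) = ((1 + q) * itemA q k + 2 * (1 + sqrt ((1 + itemA q k) * (1 + q * itemA q k)))) / (1 - q)\<^sup>2"

definition itemBeta :: "real \<Rightarrow> nat \<Rightarrow> real" where
  "itemBeta q k = itemA q k / ((1 - q) * itemA q (Suc k))"

definition itemDelta :: "real \<Rightarrow> nat \<Rightarrow> real" where
  "itemDelta q k = sqrt (itemA q (Suc k) / (1 + q * itemA q (Suc k)))"

definition itemSigma :: "real \<Rightarrow> nat \<Rightarrow> real" where
  "itemSigma q k = sqrt ((1 + itemA q k) * (1 + q * itemA q k))"

fun item :: "real \<Rightarrow> real \<Rightarrow> ('a::real_inner \<Rightarrow> 'a) \<Rightarrow> ('a \<Rightarrow> ereal) \<Rightarrow> 'a \<Rightarrow> nat \<Rightarrow> 'a \<times> 'a" where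
  "item L \<mu> gf g x0 0 = (x0, x0)"
| "item L \<mu> gf g x0 (Suc k) =
    (let q = \<mu> / L; (x, z) = item L \<mu> gf g x0 k;
         \<beta> = itemBeta q k; \<delta> = itemDelta q k;
         y = (1 - \<beta>) *\<^sub>R z + \<beta> *\<^sub>R x;
         zb = (1 - q * \<delta>) *\<^sub>R z + (q * \<delta>) *\<^sub>R y - (\<delta> / L) *\<^sub>R gf y;
         z' = prox (\<delta> / L) g zb;
         x' = y - (1 / L) *\<^sub>R gf y - (1 / \<delta>) *\<^sub>R (zb - z')
     in (x', z'))"

definition itemX where "itemX L \<mu> gf g x0 k = fst (item L \<mu> gf g x0 k)"
definition itemZ where "itemZ L \<mu> gf g x0 k = snd (item L \<mu> gf g x0 k)"

definition itemY where
  "itemY L \<mu> gf g x0 k = (1 - itemBeta (\<mu> / L) k) *\<^sub>R itemZ L \<mu> gf g x0 k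
                          + itemBeta (\<mu> / L) k *\<^sub>R itemX L \<mu> gf g x0 k"

text \<open>bar z^{k+1}, indexed by k.\<close>
definition itemZbar where
  "itemZbar L \<mu> gf g x0 k = (let q = \<mu> / L; \<delta> = itemDelta q k; y = itemY L \<mu> gf g x0 k in
     (1 - q * \<delta>) *\<^sub>R itemZ L \<mu> gf g x0 k + (q * \<delta>) *\<^sub>R y - (\<delta> / L) *\<^sub>R gf y)"

text \<open>s_g^k = L / delta_{k-1} (bar z^k - z^k) for k >= 1, and s_g^0 = s_g^1.\<close>
definition itemS where
  "itemS L \<mu> gf g x0 k = (let j = (if k = 0 then 0 else k - 1) in
     (L / itemDelta (\<mu> / L) j) *\<^sub>R (itemZbar L \<mu> gf g x0 j - itemZ L \<mu> gf g x0 (Suc j)))"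

definition If :: "real \<Rightarrow> real \<Rightarrow> ('a::real_inner \<Rightarrow> real) \<Rightarrow> ('a \<Rightarrow> 'a) \<Rightarrow> 'a \<Rightarrow> 'a \<Rightarrow> real" where
  "If L \<mu> f gf x y = f x - f y - inner (gf y) (x - y) - \<mu> / 2 * (norm (x - y))\<^sup>2
     - 1 / (2 * (L - \<mu>)) * (norm (gf x - gf y - \<mu> *\<^sub>R (x - y)))\<^sup>2"

definition Ig :: "('a::real_inner \<Rightarrow> ereal) \<Rightarrow> 'a \<Rightarrow> 'a \<Rightarrow> 'a \<Rightarrow> ereal" where
  "Ig g x y s = g x - g y - ereal (inner s (x - y))"

text \<open>Lyapunov quantity V_k (ereal-valued; ereal has 0 * (+-infinity) = 0).
  The convention y^{-1} = y^0 is realised by truncated subtraction k - 1.\<close>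
definition itemV where
  "itemV L \<mu> f gf g x0 xs k = (let q = \<mu> / L; A = itemA q k;
      y' = itemY L \<mu> gf g x0 (k - 1); z = itemZ L \<mu> gf g x0 k;
      s = itemS L \<mu> gf g x0 k; sstar = - gf xs in
    ereal ((1 - q) * A * If L \<mu> f gf y' xs)
    + ereal (q * A) * Ig g xs z s
    + ereal (q * A + 1 - itemSigma q k) * Ig g z xs sstar
    + ereal (A / (2 * L) * (norm (s - sstar))\<^sup>2)
    + ereal ((L + \<mu> * A) * (norm (z - xs))\<^sup>2))"

end

theory Submission
  imports Defs
begin


lemma line_deriv:
  fixes f :: "'a::real_inner \<Rightarrow> real"
  assumes grad: "\<And>x. GDERIV f x :> gf x"
  shows "((\<lambda>t. f (v + t *\<^sub>R d)) has_field_derivative inner d (gf (v + t *\<^sub>R d))) (at t)"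
proof -
  have l: "((\<lambda>t. v + t *\<^sub>R d) has_derivative (\<lambda>h. h *\<^sub>R d)) (at t)"
    by (auto intro!: derivative_eq_intros)
  have g: "(f has_derivative (\<lambda>h. inner h (gf (v + t *\<^sub>R d)))) (at (v + t *\<^sub>R d))"
    using grad[of "v + t *\<^sub>R d"] by (simp add: gderiv_def)
  have "((\<lambda>t. f (v + t *\<^sub>R d)) has_derivative (\<lambda>h. inner (h *\<^sub>R d) (gf (v + t *\<^sub>R d)))) (at t)"
    using has_derivative_compose[OF l g] by simp
  then show ?thesis unfolding has_field_derivative_def
    by (rule has_derivative_eq_rhs) (auto simp: fun_eq_iff)
qed

lemma grad_sc:
  fixes f :: "'a::real_inner \<Rightarrow> real"
  assumes grad: "\<And>x. GDERIV f x :> gf x" and sc: "strongly_convex \<mu> f"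
  shows "f v + inner (gf v) (u - v) + \<mu>/2 * (norm (u - v))\<^sup>2 \<le> f u"
proof -
  define d where "d = u - v"
  define \<psi> where "\<psi> = (\<lambda>t::real. f (v + t *\<^sub>R d) - \<mu>/2 * t\<^sup>2 * (norm d)\<^sup>2)"
  have conv: "convex_on UNIV \<psi>"
  proof (rule convex_onI)
    fix t x y :: real assume t: "0<t" "t<1"
    have e: "(1-t) *\<^sub>R (v + x *\<^sub>R d) + t *\<^sub>R (v + y *\<^sub>R d) = v + ((1-t)*x + t*y) *\<^sub>R d"
      by (simp add: algebra_simps)
    have nn: "(norm ((v + x *\<^sub>R d) - (v + y *\<^sub>R d)))\<^sup>2 = (x - y)\<^sup>2 * (norm d)\<^sup>2"
    proof -
      have "(v + x *\<^sub>R d) - (v + y *\<^sub>R d) = (x - y) *\<^sub>R d" by (simp add: algebra_simps)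
      then show ?thesis by (simp add: power_mult_distrib)
    qed
    have H0: "f ((1-t) *\<^sub>R (v + x *\<^sub>R d) + t *\<^sub>R (v + y *\<^sub>R d)) \<le> (1-t) * f (v + x *\<^sub>R d) + t * f (v + y *\<^sub>R d) - \<mu>/2 * t * (1-t) * (norm ((v + x *\<^sub>R d) - (v + y *\<^sub>R d)))\<^sup>2"
      using sc t unfolding strongly_convex_def by (meson less_eq_real_def)
    have H: "f (v + ((1-t)*x + t*y) *\<^sub>R d) \<le> (1-t) * f (v + x *\<^sub>R d) + t * f (v + y *\<^sub>R d) - \<mu>/2 * t * (1-t) * ((x - y)\<^sup>2 * (norm d)\<^sup>2)"
      using H0 unfolding e nn .
    have alg: "\<mu>/2 * ((1-t)*x+t*y)\<^sup>2 * (norm d)\<^sup>2 = (1-t)*(\<mu>/2 * x\<^sup>2 * (norm d)\<^sup>2) + t*(\<mu>/2 * y\<^sup>2 * (norm d)\<^sup>2) - \<mu>/2 * t * (1-t) * ((x - y)\<^sup>2 * (norm d)\<^sup>2)"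
      by (simp add: field_simps power2_eq_square)
    have ee: "(1-t) *\<^sub>R x + t *\<^sub>R y = (1-t)*x + t*y" by simp
    show "\<psi> ((1-t) *\<^sub>R x + t *\<^sub>R y) \<le> (1-t) * \<psi> x + t * \<psi> y"
      unfolding \<psi>_def ee using H alg by (simp add: algebra_simps)
  qed simp
  have d1: "((\<lambda>t. f (v + t *\<^sub>R d)) has_field_derivative inner d (gf v)) (at 0)"
    using line_deriv[OF grad, where v=v and t=0 and d=d] by simp
  have d2: "((\<lambda>t. \<mu>/2 * t\<^sup>2 * (norm d)\<^sup>2) has_field_derivative 0) (at 0)"
    by (auto intro!: derivative_eq_intros)
  have "(\<psi> has_field_derivative inner d (gf v)) (at 0)"
    unfolding \<psi>_def using DERIV_diff[OF d1 d2] by simp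
  then have "\<psi> 1 - \<psi> 0 \<ge> inner d (gf v) * (1 - 0)"
    by (intro convex_on_imp_above_tangent[OF conv]) auto
  then show ?thesis unfolding \<psi>_def d_def by (simp add: inner_commute)
qed

lemma descent:
  fixes f :: "'a::real_inner \<Rightarrow> real"
  assumes grad: "\<And>x. GDERIV f x :> gf x" and lip: "L-lipschitz_on UNIV gf"
  shows "f u \<le> f v + inner (gf v) (u - v) + L/2 * (norm (u - v))\<^sup>2"
proof -
  define d where "d = u - v"
  define \<psi> where "\<psi> = (\<lambda>t::real. f (v + t *\<^sub>R d) - t * inner (gf v) d - L/2 * t\<^sup>2 * (norm d)\<^sup>2)"
  have "\<psi> 0 \<ge> \<psi> 1"
  proof (rule DERIV_nonpos_imp_nonincreasing[of 0 1 \<psi>])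
    fix t :: real assume t: "0 \<le> t" "t \<le> 1"
    have "(\<psi> has_field_derivative (inner d (gf (v + t *\<^sub>R d)) - inner (gf v) d - L * t * (norm d)\<^sup>2)) (at t)"
      unfolding \<psi>_def
      by (rule derivative_eq_intros line_deriv[OF grad] refl | simp)+
    moreover have "inner d (gf (v + t *\<^sub>R d)) - inner (gf v) d - L * t * (norm d)\<^sup>2 \<le> 0"
    proof -
      have "inner d (gf (v + t *\<^sub>R d)) - inner (gf v) d = inner (gf (v + t *\<^sub>R d) - gf v) d"
        by (simp add: inner_diff_right inner_commute)
      also have "\<dots> \<le> norm (gf (v + t *\<^sub>R d) - gf v) * norm d"
        by (rule norm_cauchy_schwarz)
      also have "norm (gf (v + t *\<^sub>R d) - gf v) \<le> L * norm ((v + t *\<^sub>R d) - v)"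
        using lipschitz_onD[OF lip, of "v + t *\<^sub>R d" v] by (simp add: dist_norm)
      then have "norm (gf (v + t *\<^sub>R d) - gf v) * norm d \<le> L * norm ((v + t *\<^sub>R d) - v) * norm d"
        by (simp add: mult_right_mono)
      also have "L * norm ((v + t *\<^sub>R d) - v) * norm d = L * t * (norm d)\<^sup>2"
        using t by (simp add: power2_eq_square)
      finally show ?thesis by simp
    qed
    ultimately show "\<exists>y. (\<psi> has_field_derivative y) (at t) \<and> y \<le> 0" by blast
  qed (rule zero_le_one)
  then show ?thesis unfolding \<psi>_def d_def by simp
qed

lemma If_nonneg:
  fixes f :: "'a::real_inner \<Rightarrow> real"
  assumes mu: "0 < \<mu>" "\<mu> < L" and grad: "\<And>x. GDERIV f x :> gf x"
    and sc: "strongly_convex \<mu> f" and lip: "L-lipschitz_on UNIV gf"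
  shows "If L \<mu> f gf x y \<ge> 0"
proof -
  define w where "w = x - (1/(L-\<mu>)) *\<^sub>R (gf x - gf y - \<mu> *\<^sub>R (x - y))"
  have G: "f y + inner (gf y) (w - y) + \<mu>/2 * (norm (w - y))\<^sup>2 \<le> f w"
    by (rule grad_sc[OF grad sc])
  have D: "f w \<le> f x + inner (gf x) (w - x) + L/2 * (norm (w - x))\<^sup>2"
    by (rule descent[OF grad lip])
  have Lm: "L - \<mu> \<noteq> 0" using mu by simp
  define c where "c = 1/(L-\<mu>)"
  define D where "D = gf x - gf y - \<mu> *\<^sub>R (x - y)"
  have c1: "c * (L - \<mu>) = 1" using Lm unfolding c_def by simp
  have c2: "c * c * (L - \<mu>) = c" using c1 by (metis mult.assoc mult.right_neutral)
  have wx: "w - x = - (c *\<^sub>R D)" unfolding w_def c_def D_def by simp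
  have wy: "w - y = (x - y) - c *\<^sub>R D" unfolding w_def c_def D_def by (simp add: algebra_simps)
  have n1: "(norm (w - x))\<^sup>2 = c * c * inner D D" unfolding wx power2_norm_eq_inner by simp
  have n2: "(norm (w - y))\<^sup>2 = inner (x-y) (x-y) - 2 * c * inner (x - y) D + c * c * inner D D"
    unfolding wy power2_norm_eq_inner by (simp add: inner_diff_left inner_diff_right inner_commute algebra_simps)
  have i1: "inner (gf x) (w - x) = - c * inner (gf x) D" unfolding wx by simp
  have i2: "inner (gf y) (w - y) = inner (gf y) (x - y) - c * inner (gf y) D" unfolding wy by (simp add: inner_diff_right)
  have DD: "inner D D = inner (gf x) D - inner (gf y) D - \<mu> * inner (x - y) D"
    unfolding D_def by (simp add: inner_diff_left)
  have If_eq: "If L \<mu> f gf x y = f x - f y - inner (gf y) (x - y) - \<mu>/2 * inner (x-y) (x-y) - c/2 * inner D D"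
    unfolding If_def c_def D_def power2_norm_eq_inner by simp
  have DDc: "c * inner D D = c * inner (gf x) D - c * inner (gf y) D - \<mu> * (c * inner (x - y) D)"
    unfolding DD by (simp add: algebra_simps)
  have T: "L/2 * (c * c * inner D D) - \<mu>/2 * (c * c * inner D D) = c/2 * inner D D"
  proof -
    have "L/2 * (c * c * inner D D) - \<mu>/2 * (c * c * inner D D) = (c * c * (L - \<mu>)) / 2 * inner D D"
      by (simp add: algebra_simps)
    then show ?thesis unfolding c2 .
  qed
  have key: "If L \<mu> f gf x y = (f x + inner (gf x) (w - x) + L/2 * (norm (w - x))\<^sup>2 - f w)
       + (f w - (f y + inner (gf y) (w - y) + \<mu>/2 * (norm (w - y))\<^sup>2))"
    unfolding If_eq n1 n2 i1 i2 using DDc T by (simp add: algebra_simps) argo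
  show ?thesis using G D key by linarith
qed



lemma If3:
  fixes f :: "'a::real_inner \<Rightarrow> real"
  shows "If L \<mu> f gf p r - If L \<mu> f gf p y - If L \<mu> f gf y r
    = inner (gf y - gf r - \<mu> *\<^sub>R (y - r)) ((p - y) - (1/(L-\<mu>)) *\<^sub>R (gf p - gf y - \<mu> *\<^sub>R (p - y)))"
proof -
  define c where "c = 1/(L-\<mu>)"
  have h: "1/(2*(L-\<mu>)) = c/2" unfolding c_def by simp
  show ?thesis
    unfolding If_def h power2_norm_eq_inner c_def[symmetric]
    by (simp add: inner_add_left inner_add_right inner_diff_left inner_diff_right inner_commute
        algebra_simps)
qed

lemma If2:
  fixes f :: "'a::real_inner \<Rightarrow> real"
  shows "If L \<mu> f gf r y + If L \<mu> f gf y r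
    = inner (gf y - gf r - \<mu> *\<^sub>R (y - r)) ((y - r) - (1/(L-\<mu>)) *\<^sub>R (gf y - gf r - \<mu> *\<^sub>R (y - r)))"
proof -
  define c where "c = 1/(L-\<mu>)"
  have h: "1/(2*(L-\<mu>)) = c/2" unfolding c_def by simp
  show ?thesis
    unfolding If_def h power2_norm_eq_inner c_def[symmetric]
    by (simp add: inner_add_left inner_add_right inner_diff_left inner_diff_right inner_commute
        algebra_simps)
qed
lemma core_id:
  fixes Z w u v :: "'a::real_inner"
  assumes r1: "(sg - 1) * d = a"
    and r2: "b = (1 + q*b) * d\<^sup>2"
    and r3: "(1+q)*b - a = 2*(1+q*b)*d"
    and r4: "c1 = 2*(1+q*b)*(1-q*d)*d"
    and r5: "1 + q*a = (1+q*b)*(1-q*d)\<^sup>2"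
  shows "inner w (b *\<^sub>R w + a *\<^sub>R v - c1 *\<^sub>R Z) + (q*a+1-sg) * inner v Z
     + (sg-1) * inner v ((1-q*d) *\<^sub>R Z - d *\<^sub>R (w+u))
     - ((1+q)*b - a) * inner u ((1-q*d) *\<^sub>R Z - d *\<^sub>R (w+u))
     + a/2 * (norm v)\<^sup>2 + (1+q*a) * (norm Z)\<^sup>2 - b/2 * (norm u)\<^sup>2
     - (1+q*b) * (norm ((1-q*d) *\<^sub>R Z - d *\<^sub>R (w+u)))\<^sup>2 - (b-a)/2 * (norm u)\<^sup>2
     - a/2 * (norm (v - u))\<^sup>2 = 0"
proof -
  have e: "inner w (b *\<^sub>R w + a *\<^sub>R v - c1 *\<^sub>R Z) + (q*a+1-sg) * inner v Z
     + (sg-1) * inner v ((1-q*d) *\<^sub>R Z - d *\<^sub>R (w+u))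
     - ((1+q)*b - a) * inner u ((1-q*d) *\<^sub>R Z - d *\<^sub>R (w+u))
     + a/2 * (norm v)\<^sup>2 + (1+q*a) * (norm Z)\<^sup>2 - b/2 * (norm u)\<^sup>2
     - (1+q*b) * (norm ((1-q*d) *\<^sub>R Z - d *\<^sub>R (w+u)))\<^sup>2 - (b-a)/2 * (norm u)\<^sup>2
     - a/2 * (norm (v - u))\<^sup>2
   = (a - (sg-1)*d) * (inner v w + inner v u) + q*(a - (sg-1)*d) * inner v Z
     + ((1+q*a) - (1+q*b)*(1-q*d)\<^sup>2) * inner Z Z
     + (2*(1+q*b)*(1-q*d)*d - c1) * inner w Z
     + (2*(1+q*b)*d - ((1+q)*b - a)) * (1-q*d) * inner u Z
     + (b - (1+q*b)*d\<^sup>2) * inner w w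
     + (((1+q)*b - a)*d - 2*(1+q*b)*d\<^sup>2) * inner w u
     + ((((1+q)*b-a) - 2*(1+q*b)*d)*d + ((1+q*b)*d\<^sup>2 - b)) * inner u u"
    unfolding power2_norm_eq_inner
    by (simp add: inner_add_left inner_add_right inner_diff_left inner_diff_right inner_commute
        algebra_simps power2_eq_square) (simp add: field_simps)
  have c1': "a - (sg-1)*d = 0" using r1 by simp
  have c2': "(1+q*a) - (1+q*b)*(1-q*d)\<^sup>2 = 0" using r5 by simp
  have c3': "2*(1+q*b)*(1-q*d)*d - c1 = 0" using r4 by simp
  have c4': "2*(1+q*b)*d - ((1+q)*b - a) = 0" using r3 by simp
  have c5': "b - (1+q*b)*d\<^sup>2 = 0" using r2 by simp
  have c6': "((1+q)*b - a)*d - 2*(1+q*b)*d\<^sup>2 = 0" using r3 by (simp add: power2_eq_square)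
  have c7': "(((1+q)*b-a) - 2*(1+q*b)*d)*d + ((1+q*b)*d\<^sup>2 - b) = 0" using r3 r2 by simp
  show ?thesis unfolding e c1' c2' c3' c4' c5' c6' c7' by simp
qed

definition Igr :: "('a::real_inner \<Rightarrow> real) \<Rightarrow> 'a \<Rightarrow> 'a \<Rightarrow> 'a \<Rightarrow> real" where
  "Igr g x y s = g x - g y - inner s (x - y)"

definition Vr where
  "Vr L \<mu> f gf g xs A sg yp zc sc = (1 - \<mu>/L)*A*If L \<mu> f gf yp xs + (\<mu>/L)*A*Igr g xs zc sc
     + ((\<mu>/L)*A+1-sg)*Igr g zc xs (- gf xs) + A/(2*L)*(norm (sc - (- gf xs)))\<^sup>2 + (L+\<mu>*A)*(norm (zc - xs))\<^sup>2"

lemma step_eq: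
  fixes f :: "'a::real_inner \<Rightarrow> real" and gf :: "'a \<Rightarrow> 'a" and g :: "'a \<Rightarrow> real"
  assumes L: "L > 0" and q0: "0 < q" and q1: "q < 1" and mu: "\<mu> = q*L"
    and r0: "be*(1-q)*b = a"
    and r1: "(sg - 1) * d = a"
    and r2: "b = (1 + q*b) * d\<^sup>2"
    and r3: "(1+q)*b - a = 2*(1+q*b)*d"
    and r4: "b*(1-q)*(1-be) = 2*(1+q*b)*(1-q*d)*d"
    and r5: "1 + q*a = (1+q*b)*(1-q*d)\<^sup>2"
    and y: "y = (1-be) *\<^sub>R z + be *\<^sub>R (ym - (1/L) *\<^sub>R (gf ym + s))"
    and zp: "zp = (1-q*d) *\<^sub>R z + (q*d) *\<^sub>R y - (d/L) *\<^sub>R gf y - (d/L) *\<^sub>R sp"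
  shows "Vr L \<mu> f gf g xs a sg ym z s - Vr L \<mu> f gf g xs b sg' y zp sp =
     (1-q)*a*If L \<mu> f gf ym y + (1-q)*(b-a)*If L \<mu> f gf xs y + (sg-1)*Igr g zp z s
     + (b-a+sg'-sg)*Igr g zp xs (- gf xs) + (b-a)*Igr g xs zp sp
     + (b-a)/(2*L)*(norm (sp + gf xs))\<^sup>2 + a/(2*L)*(norm (s - sp))\<^sup>2"
proof -
  have qq: "\<mu>/L = q" using mu L by simp
  define Z where "Z = z - xs"
  define Zp where "Zp = zp - xs"
  define c1 where "c1 = b*(1-q)*(1-be)"
  define w where "w = (1/L) *\<^sub>R (gf y - gf xs) - q *\<^sub>R (y - xs)"
  define u where "u = (1/L) *\<^sub>R (sp + gf xs)"
  define v where "v = (1/L) *\<^sub>R (s + gf xs)"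
  define X where "X = ym - (1/L) *\<^sub>R (gf ym + s) - xs"
  define F where "F = (1-q)*a*(If L \<mu> f gf ym xs - If L \<mu> f gf ym y - If L \<mu> f gf y xs)
      - (1-q)*(b-a)*(If L \<mu> f gf xs y + If L \<mu> f gf y xs)"
  define Gp where "Gp = (q*a+1-sg)*inner (s + gf xs) Z + (sg-1)*inner (s + gf xs) Zp
      - ((1+q)*b - a)*inner (sp + gf xs) Zp"
  define Np where "Np = a/(2*L)*(norm (s + gf xs))\<^sup>2 + (L+\<mu>*a)*(norm Z)\<^sup>2 - b/(2*L)*(norm (sp + gf xs))\<^sup>2
      - (L+\<mu>*b)*(norm Zp)\<^sup>2 - (b-a)/(2*L)*(norm (sp + gf xs))\<^sup>2 - a/(2*L)*(norm (s - sp))\<^sup>2"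
  have E1: "Vr L \<mu> f gf g xs a sg ym z s - Vr L \<mu> f gf g xs b sg' y zp sp -
     ((1-q)*a*If L \<mu> f gf ym y + (1-q)*(b-a)*If L \<mu> f gf xs y + (sg-1)*Igr g zp z s
     + (b-a+sg'-sg)*Igr g zp xs (- gf xs) + (b-a)*Igr g xs zp sp
     + (b-a)/(2*L)*(norm (sp + gf xs))\<^sup>2 + a/(2*L)*(norm (s - sp))\<^sup>2) = F + Gp + Np"
    unfolding Vr_def qq Igr_def F_def Gp_def Np_def Z_def Zp_def
    by (simp add: inner_add_left inner_add_right inner_diff_left inner_diff_right algebra_simps)
  have V1: "y - xs = (1-be) *\<^sub>R Z + be *\<^sub>R X"
    unfolding y Z_def X_def by (simp add: algebra_simps)
  have V2: "Zp = (1-q*d) *\<^sub>R Z - d *\<^sub>R (w + u)"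
    unfolding Zp_def zp Z_def w_def u_def by (simp add: algebra_simps)
  define kap where "kap = 1/(L-\<mu>)"
  have k1: "(1-q)*kap = 1/L" unfolding kap_def mu using L q1 by (simp add: field_simps)
  have k2: "(1-q)*kap*\<mu> = q" unfolding kap_def mu using L q1 by (simp add: field_simps)
  have k3: "1/L*\<mu> = q" unfolding mu using L by simp
  define W where "W = gf y - gf xs - \<mu> *\<^sub>R (y - xs)"
  have WL: "W = L *\<^sub>R w" unfolding W_def w_def mu using L by (simp add: algebra_simps)
  have A1: "If L \<mu> f gf ym xs - If L \<mu> f gf ym y - If L \<mu> f gf y xs
      = inner W ((ym - y) - kap *\<^sub>R (gf ym - gf y - \<mu> *\<^sub>R (ym - y)))"
    unfolding W_def kap_def by (rule If3)
  have A2: "If L \<mu> f gf xs y + If L \<mu> f gf y xs = inner W ((y - xs) - kap *\<^sub>R W)"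
    unfolding W_def kap_def by (rule If2)
  have Va: "((1-q)*a) *\<^sub>R ((ym - y) - kap *\<^sub>R (gf ym - gf y - \<mu> *\<^sub>R (ym - y)))
      = a *\<^sub>R (ym - y) - (a/L) *\<^sub>R (gf ym - gf y)"
  proof -
    have "((1-q)*a) *\<^sub>R ((ym - y) - kap *\<^sub>R (gf ym - gf y - \<mu> *\<^sub>R (ym - y)))
      = ((1-q)*a) *\<^sub>R (ym - y) - (((1-q)*kap)*a) *\<^sub>R (gf ym - gf y) + (((1-q)*kap*\<mu>)*a) *\<^sub>R (ym - y)"
      by (simp add: algebra_simps)
    also have "\<dots> = ((1-q)*a) *\<^sub>R (ym - y) - ((1/L)*a) *\<^sub>R (gf ym - gf y) + (q*a) *\<^sub>R (ym - y)"
      unfolding k1 k3 ..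
    also have "\<dots> = a *\<^sub>R (ym - y) - (a/L) *\<^sub>R (gf ym - gf y)"
      by (simp add: algebra_simps)
    finally show ?thesis .
  qed
  have Vb: "((1-q)*(b-a)) *\<^sub>R ((y - xs) - kap *\<^sub>R W)
      = (b-a) *\<^sub>R (y - xs) - ((b-a)/L) *\<^sub>R (gf y - gf xs)"
  proof -
    have "((1-q)*(b-a)) *\<^sub>R ((y - xs) - kap *\<^sub>R W)
      = ((1-q)*(b-a)) *\<^sub>R (y - xs) - (((1-q)*kap)*(b-a)) *\<^sub>R (gf y - gf xs) + (((1-q)*kap*\<mu>)*(b-a)) *\<^sub>R (y - xs)"
      unfolding W_def by (simp add: algebra_simps)
    also have "\<dots> = ((1-q)*(b-a)) *\<^sub>R (y - xs) - ((1/L)*(b-a)) *\<^sub>R (gf y - gf xs) + (q*(b-a)) *\<^sub>R (y - xs)"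
      unfolding k1 k3 ..
    also have "\<dots> = (b-a) *\<^sub>R (y - xs) - ((b-a)/L) *\<^sub>R (gf y - gf xs)"
      by (simp add: algebra_simps)
    finally show ?thesis .
  qed
  have FV: "a *\<^sub>R (ym - y) - (a/L) *\<^sub>R (gf ym - gf y) - ((b-a) *\<^sub>R (y - xs) - ((b-a)/L) *\<^sub>R (gf y - gf xs))
      = b *\<^sub>R w + a *\<^sub>R v - c1 *\<^sub>R Z"
  proof -
    have "a *\<^sub>R (ym - y) - (a/L) *\<^sub>R (gf ym - gf y) - ((b-a) *\<^sub>R (y - xs) - ((b-a)/L) *\<^sub>R (gf y - gf xs))
        - (b *\<^sub>R w + a *\<^sub>R v - c1 *\<^sub>R Z) = a *\<^sub>R X - (b*(1-q)) *\<^sub>R (y - xs) + c1 *\<^sub>R Z"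
      unfolding w_def v_def X_def by (simp add: algebra_simps diff_divide_distrib)
    also have "\<dots> = 0"
    proof -
      have "(b*(1-q)) *\<^sub>R (y - xs) = (b*(1-q)*(1-be)) *\<^sub>R Z + (be*(1-q)*b) *\<^sub>R X"
        unfolding V1 by (simp add: algebra_simps)
      then show ?thesis unfolding r0 c1_def by simp
    qed
    finally show ?thesis by simp
  qed
  have E2: "F = L * inner w (b *\<^sub>R w + a *\<^sub>R v - c1 *\<^sub>R Z)"
  proof -
    have "F = inner W (((1-q)*a) *\<^sub>R ((ym - y) - kap *\<^sub>R (gf ym - gf y - \<mu> *\<^sub>R (ym - y)))
        - ((1-q)*(b-a)) *\<^sub>R ((y - xs) - kap *\<^sub>R W))"
      unfolding F_def A1 A2 by (simp add: inner_diff_right)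
    also have "\<dots> = inner W (b *\<^sub>R w + a *\<^sub>R v - c1 *\<^sub>R Z)"
      unfolding Va Vb FV ..
    finally show ?thesis unfolding WL by simp
  qed
  have sv: "s + gf xs = L *\<^sub>R v" unfolding v_def using L by simp
  have su: "sp + gf xs = L *\<^sub>R u" unfolding u_def using L by simp
  have ss: "s - sp = L *\<^sub>R (v - u)" unfolding v_def u_def using L by (simp add: algebra_simps)
  have E3: "Gp + Np = L * ((q*a+1-sg) * inner v Z + (sg-1) * inner v Zp - ((1+q)*b - a) * inner u Zp
     + a/2 * (norm v)\<^sup>2 + (1+q*a) * (norm Z)\<^sup>2 - b/2 * (norm u)\<^sup>2
     - (1+q*b) * (norm Zp)\<^sup>2 - (b-a)/2 * (norm u)\<^sup>2 - a/2 * (norm (v - u))\<^sup>2)"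
  proof -
    have nv: "(norm (s + gf xs))\<^sup>2 = L\<^sup>2 * (norm v)\<^sup>2" unfolding sv using L by (simp add: power_mult_distrib)
    have nu: "(norm (sp + gf xs))\<^sup>2 = L\<^sup>2 * (norm u)\<^sup>2" unfolding su using L by (simp add: power_mult_distrib)
    have nvu: "(norm (s - sp))\<^sup>2 = L\<^sup>2 * (norm (v - u))\<^sup>2" unfolding ss using L by (simp add: power_mult_distrib)
    have i1: "inner (s + gf xs) Z = L * inner v Z" unfolding sv by simp
    have i2: "inner (s + gf xs) Zp = L * inner v Zp" unfolding sv by simp
    have i3: "inner (sp + gf xs) Zp = L * inner u Zp" unfolding su by simp
    show ?thesis unfolding Gp_def Np_def nv nu nvu i1 i2 i3 mu using L
      by (simp add: power2_eq_square field_simps)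
  qed
  have core: "inner w (b *\<^sub>R w + a *\<^sub>R v - c1 *\<^sub>R Z) + (q*a+1-sg) * inner v Z
     + (sg-1) * inner v Zp - ((1+q)*b - a) * inner u Zp
     + a/2 * (norm v)\<^sup>2 + (1+q*a) * (norm Z)\<^sup>2 - b/2 * (norm u)\<^sup>2
     - (1+q*b) * (norm Zp)\<^sup>2 - (b-a)/2 * (norm u)\<^sup>2 - a/2 * (norm (v - u))\<^sup>2 = 0"
    unfolding V2 by (rule core_id[OF r1 r2 r3 _ r5]) (simp add: c1_def r4)
  have "F + Gp + Np = L * inner w (b *\<^sub>R w + a *\<^sub>R v - c1 *\<^sub>R Z) + L * ((q*a+1-sg) * inner v Z + (sg-1) * inner v Zp - ((1+q)*b - a) * inner u Zp
     + a/2 * (norm v)\<^sup>2 + (1+q*a) * (norm Z)\<^sup>2 - b/2 * (norm u)\<^sup>2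
     - (1+q*b) * (norm Zp)\<^sup>2 - (b-a)/2 * (norm u)\<^sup>2 - a/2 * (norm (v - u))\<^sup>2)"
    using E2 E3 by linarith
  also have "\<dots> = L * (inner w (b *\<^sub>R w + a *\<^sub>R v - c1 *\<^sub>R Z) + (q*a+1-sg) * inner v Z
     + (sg-1) * inner v Zp - ((1+q)*b - a) * inner u Zp
     + a/2 * (norm v)\<^sup>2 + (1+q*a) * (norm Z)\<^sup>2 - b/2 * (norm u)\<^sup>2
     - (1+q*b) * (norm Zp)\<^sup>2 - (b-a)/2 * (norm u)\<^sup>2 - a/2 * (norm (v - u))\<^sup>2)"
    by (simp add: algebra_simps)
  also have "\<dots> = 0" unfolding core by simp
  finally have "F + Gp + Np = 0" .
  then show ?thesis using E1 by simp
qed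



lemma scal:
  fixes q a :: real
  assumes q0: "0 < q" and q1: "q < 1" and a0: "a \<ge> 0"
    and sg: "sg = sqrt ((1+a)*(1+q*a))"
    and b: "b = ((1+q)*a + 2*(1+sg))/(1-q)\<^sup>2"
    and d: "d = sqrt (b/(1+q*b))"
    and be: "be = a/((1-q)*b)"
  shows "be*(1-q)*b = a" and "(sg - 1) * d = a" and "b = (1 + q*b) * d\<^sup>2"
    and "(1+q)*b - a = 2*(1+q*b)*d" and "b*(1-q)*(1-be) = 2*(1+q*b)*(1-q*d)*d"
    and "1 + q*a = (1+q*b)*(1-q*d)\<^sup>2"
    and "a \<le> b" and "1 \<le> sg" and "0 < d" and "0 < b"
proof -
  have sg2: "sg\<^sup>2 = (1+a)*(1+q*a)" unfolding sg using q0 a0 by simp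
  have nn: "0 \<le> a + q*a + q*a*a" using q0 a0 by (intro add_nonneg_nonneg mult_nonneg_nonneg) auto
  have pr: "1 \<le> (1+a)*(1+q*a)" using nn by (simp add: algebra_simps)
  have sg1: "1 \<le> sg" unfolding sg using real_sqrt_le_mono[OF pr] by simp
  define t where "t = (1+q+q*a)/(1+sg)"
  have n1: "0 < 1+q+q*a" using q0 a0 by (smt (verit) mult_nonneg_nonneg)
  have t0: "t > 0" unfolding t_def using n1 sg1 by (intro divide_pos_pos) auto
  have tsg: "t*(1+sg) = 1+q+q*a" unfolding t_def using sg1 by simp
  have sgt: "sg - 1 = t*a"
  proof -
    have "(sg - 1)*(sg+1) = a*(1+q+q*a)" using sg2 by (simp add: algebra_simps power2_eq_square)
    also have "\<dots> = (t*a)*(sg+1)" using tsg by (simp add: algebra_simps)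
    finally show ?thesis using sg1 by simp
  qed
  have at: "a*(t\<^sup>2-q) = 1+q-2*t"
  proof (cases "a = 0")
    case True
    then have "sg = 1" unfolding sg by simp
    then have "t = (1+q)/2" unfolding t_def using True by simp
    then show ?thesis using True by simp
  next
    case False
    have "(1 + t*a)\<^sup>2 = (1+a)*(1+q*a)" using sgt sg2 by (smt (verit))
    then have "a * (2*t + t\<^sup>2*a - (1+q) - q*a) = 0" by (simp add: algebra_simps power2_eq_square)
    then have "2*t + t\<^sup>2*a - (1+q) - q*a = 0" using False by simp
    then show ?thesis by (simp add: algebra_simps)
  qed
  have bt: "b*(t\<^sup>2-q) = 1"
  proof -
    have q1': "(1-q)\<^sup>2 \<noteq> 0" using q1 by simp
    have "b*(1-q)\<^sup>2 = (1+q)*a + 2*(1+sg)" unfolding b using q1' by simp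
    also have "\<dots> = (1+q)*a + 4 + 2*t*a" using sgt by (simp add: algebra_simps)
    finally have e: "b*(1-q)\<^sup>2 = (1+q)*a + 4 + 2*t*a" .
    have "b*(1-q)\<^sup>2*(t\<^sup>2-q) = (1+q)*(a*(t\<^sup>2-q)) + 4*(t\<^sup>2-q) + 2*t*(a*(t\<^sup>2-q))"
      unfolding e by (simp add: algebra_simps)
    also have "\<dots> = (1-q)\<^sup>2" unfolding at by (simp add: algebra_simps power2_eq_square)
    finally have "(b*(t\<^sup>2-q))*(1-q)\<^sup>2 = 1*(1-q)\<^sup>2" by (simp add: algebra_simps)
    then show ?thesis using q1' by (metis mult_right_cancel)
  qed
  have b0: "b \<ge> 0" unfolding b using q0 q1 a0 sg1 by simp
  have bpos: "b > 0" using bt b0 by (metis less_eq_real_def mult_zero_left zero_neq_one)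
  have tq: "t\<^sup>2 - q > 0"
  proof -
    have "0 < b*(t\<^sup>2-q)" using bt by simp
    then show ?thesis using bpos by (simp add: zero_less_mult_iff)
  qed
  have ab: "a = (1+q-2*t)*b"
  proof -
    have "a = a*(b*(t\<^sup>2-q))" using bt by simp
    also have "\<dots> = b*(a*(t\<^sup>2-q))" by (simp add: algebra_simps)
    finally show ?thesis unfolding at by (simp add: algebra_simps)
  qed
  have bt2: "1 + q*b = b*t\<^sup>2" using bt by (simp add: algebra_simps)
  have dt: "d = 1/t"
  proof -
    have "b/(1+q*b) = 1/t\<^sup>2" unfolding bt2 using bpos t0 by simp
    then show ?thesis unfolding d using t0 by (simp add: real_sqrt_divide)
  qed
  have qb: "(1-q)*b \<noteq> 0" using q1 bpos by simp
  show r0: "be*(1-q)*b = a" unfolding be using qb by simp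
  show "(sg - 1) * d = a" unfolding sgt dt using t0 by simp
  show "b = (1 + q*b) * d\<^sup>2" unfolding bt2 dt using t0 by (simp add: power2_eq_square)
  show "(1+q)*b - a = 2*(1+q*b)*d" unfolding bt2 dt using t0
    by (simp add: ab algebra_simps power2_eq_square)
  show "b*(1-q)*(1-be) = 2*(1+q*b)*(1-q*d)*d"
  proof -
    have "b*(1-q)*(1-be) = b*(1-q) - be*(1-q)*b" by (simp add: algebra_simps)
    also have "\<dots> = 2*b*(t-q)" unfolding r0 ab by (simp add: algebra_simps)
    also have "\<dots> = 2*(1+q*b)*(1-q*d)*d" unfolding bt2 dt using t0
      by (simp add: field_simps power2_eq_square)
    finally show ?thesis .
  qed
  show "1 + q*a = (1+q*b)*(1-q*d)\<^sup>2"
  proof -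
    have "1 + q*a = b*(t\<^sup>2-q) + q*((1+q-2*t)*b)" using bt ab by simp
    also have "\<dots> = b*t\<^sup>2*(1-q/t)\<^sup>2" using t0 by (simp add: field_simps power2_eq_square)
    finally show ?thesis unfolding bt2 dt by (simp add: divide_inverse)
  qed
  show "a \<le> b"
  proof -
    have q1': "(1-q)\<^sup>2 > 0" using q1 by simp
    have "b*(1-q)\<^sup>2 = (1+q)*a + 2*(1+sg)" unfolding b using q1' by simp
    moreover have "(1-q)\<^sup>2 * a \<le> (1+q)*a" using a0 q0 q1
      by (intro mult_right_mono) (auto simp: power2_eq_square algebra_simps)
    moreover have "2*(1+sg) \<ge> 0" using sg1 by simp
    ultimately have "(1-q)\<^sup>2 * a \<le> (1-q)\<^sup>2 * b" by (simp add: algebra_simps)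
    then show ?thesis using q1' by simp
  qed
  show "1 \<le> sg" by (rule sg1)
  show "0 < d" unfolding dt using t0 by simp
  show "0 < b" by (rule bpos)
qed


lemma lim0:
  fixes A B C :: real
  assumes "\<And>t. 0 < t \<Longrightarrow> t \<le> 1 \<Longrightarrow> B - t*C \<le> A"
  shows "B \<le> A"
proof (rule ccontr)
  assume "\<not> B \<le> A"
  then have BA: "B - A > 0" by simp
  define t where "t = min 1 ((B - A)/(2*(\<bar>C\<bar>+1)))"
  have t0: "0 < t" unfolding t_def using BA by simp
  have t1: "t \<le> 1" unfolding t_def by simp
  have "t * C \<le> t * \<bar>C\<bar>" using t0 by (simp add: mult_left_mono)
  also have "\<dots> \<le> ((B - A)/(2*(\<bar>C\<bar>+1))) * \<bar>C\<bar>" by (rule mult_right_mono) (auto simp: t_def)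
  also have "\<dots> \<le> (B - A)/2"
  proof -
    have "((B - A)/(2*(\<bar>C\<bar>+1))) * \<bar>C\<bar> = ((B - A)/2) * (\<bar>C\<bar>/(\<bar>C\<bar>+1))" by simp
    also have "\<dots> \<le> ((B - A)/2) * 1" using BA by (intro mult_left_mono) auto
    finally show ?thesis by simp
  qed
  finally have "t * C \<le> (B - A)/2" .
  with assms[OF t0 t1] BA show False by simp
qed

lemma proper_fin:
  assumes "ext_proper g" "g u \<noteq> \<infinity>"
  shows "g u = ereal (real_of_ereal (g u))"
  using assms unfolding ext_proper_def by (cases "g u") auto

lemma conv_fin:
  assumes cv: "ext_convex g" and pr: "ext_proper g" and u: "g u \<noteq> \<infinity>" and v: "g v \<noteq> \<infinity>"
    and t: "0 \<le> t" "t \<le> 1"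
  shows "g ((1-t) *\<^sub>R u + t *\<^sub>R v) \<noteq> \<infinity>"
    and "real_of_ereal (g ((1-t) *\<^sub>R u + t *\<^sub>R v)) \<le> (1-t) * real_of_ereal (g u) + t * real_of_ereal (g v)"
proof -
  have le: "g ((1-t) *\<^sub>R u + t *\<^sub>R v) \<le> ereal ((1-t) * real_of_ereal (g u) + t * real_of_ereal (g v))"
  proof -
    have "g ((1-t) *\<^sub>R u + t *\<^sub>R v) \<le> ereal (1-t) * g u + ereal t * g v"
      using cv t unfolding ext_convex_def by blast
    also have "\<dots> = ereal ((1-t) * real_of_ereal (g u) + t * real_of_ereal (g v))"
      by (subst proper_fin[OF pr u], subst proper_fin[OF pr v]) simp
    finally show ?thesis .
  qed
  then show "g ((1-t) *\<^sub>R u + t *\<^sub>R v) \<noteq> \<infinity>" by auto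
  have "g ((1-t) *\<^sub>R u + t *\<^sub>R v) \<noteq> - \<infinity>" using pr unfolding ext_proper_def by blast
  with le show "real_of_ereal (g ((1-t) *\<^sub>R u + t *\<^sub>R v)) \<le> (1-t) * real_of_ereal (g u) + t * real_of_ereal (g v)"
    by (cases "g ((1-t) *\<^sub>R u + t *\<^sub>R v)") auto
qed

lemma parallelogram_mid:
  fixes x u v :: "'a::real_inner"
  shows "(norm (x - ((1/2) *\<^sub>R u + (1/2) *\<^sub>R v)))\<^sup>2 = (norm (x - u))\<^sup>2/2 + (norm (x - v))\<^sup>2/2 - (norm (u - v))\<^sup>2/4"
  unfolding power2_norm_eq_inner
  by (simp add: inner_add_left inner_add_right inner_diff_left inner_diff_right inner_commute algebra_simps)
     (simp add: field_simps)


lemma mid_ineq: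
  fixes g :: "'a::real_inner \<Rightarrow> ereal"
  assumes cv: "ext_convex g" and pr: "ext_proper g" and u: "g u \<noteq> \<infinity>" and v: "g v \<noteq> \<infinity>"
  shows "g ((1/2) *\<^sub>R u + (1/2) *\<^sub>R v) \<noteq> \<infinity>"
    and "real_of_ereal (g ((1/2) *\<^sub>R u + (1/2) *\<^sub>R v)) + c * (norm (x - ((1/2) *\<^sub>R u + (1/2) *\<^sub>R v)))\<^sup>2
       \<le> ((real_of_ereal (g u) + c * (norm (x - u))\<^sup>2) + (real_of_ereal (g v) + c * (norm (x - v))\<^sup>2))/2
          - c/4 * (norm (u - v))\<^sup>2"
proof -
  have e: "(1/2::real) = 1 - 1/2" by simp
  have A: "g ((1 - 1/2) *\<^sub>R u + (1/2) *\<^sub>R v) \<noteq> \<infinity>"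
    and B: "real_of_ereal (g ((1 - 1/2) *\<^sub>R u + (1/2) *\<^sub>R v)) \<le> (1 - 1/2) * real_of_ereal (g u) + (1/2) * real_of_ereal (g v)"
    using conv_fin[OF cv pr u v, of "1/2"] by auto
  show "g ((1/2) *\<^sub>R u + (1/2) *\<^sub>R v) \<noteq> \<infinity>" using A by simp
  have B': "real_of_ereal (g ((1/2) *\<^sub>R u + (1/2) *\<^sub>R v)) \<le> (real_of_ereal (g u) + real_of_ereal (g v))/2"
    using B by simp
  show "real_of_ereal (g ((1/2) *\<^sub>R u + (1/2) *\<^sub>R v)) + c * (norm (x - ((1/2) *\<^sub>R u + (1/2) *\<^sub>R v)))\<^sup>2
       \<le> ((real_of_ereal (g u) + c * (norm (x - u))\<^sup>2) + (real_of_ereal (g v) + c * (norm (x - v))\<^sup>2))/2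
          - c/4 * (norm (u - v))\<^sup>2"
    unfolding parallelogram_mid using B' by (simp add: algebra_simps)
qed

lemma prox_exists:
  fixes g :: "'a::{real_inner,complete_space} \<Rightarrow> ereal" and x :: 'a
  assumes cv: "ext_convex g" and pr: "ext_proper g" and lsc: "ext_lsc g" and c0: "c > 0"
  shows "\<exists>p. g p \<noteq> \<infinity> \<and> (\<forall>w. g p + ereal (c * (norm (x - p))\<^sup>2) \<le> g w + ereal (c * (norm (x - w))\<^sup>2))"
proof -
  define gr where "gr = (\<lambda>w. real_of_ereal (g w))"
  define D where "D = {w. g w \<noteq> \<infinity>}"
  define \<phi> where "\<phi> = (\<lambda>w. gr w + c * (norm (x - w))\<^sup>2)"
  obtain w0 where w0: "g w0 \<noteq> \<infinity>" using pr unfolding ext_proper_def by blast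
  have fin: "\<And>w. w \<in> D \<Longrightarrow> g w = ereal (gr w)" using proper_fin[OF pr] unfolding D_def gr_def by auto
  have w0D: "w0 \<in> D" using w0 unfolding D_def by simp
  obtain r where r0: "r > 0" and rb: "\<And>w. w \<in> D \<Longrightarrow> dist w0 w < r \<Longrightarrow> gr w0 - 1 < gr w"
  proof -
    define S where "S = {w. g w \<le> ereal (gr w0 - 1)}"
    have "closed S" using lsc unfolding ext_lsc_def S_def by blast
    then have oS: "open (- S)" by (simp add: open_Compl)
    have "w0 \<in> - S" unfolding S_def using fin[OF w0D] by simp
    then obtain r where r: "r > 0" "ball w0 r \<subseteq> - S" using oS open_contains_ball by blast
    show ?thesis
    proof (rule that[OF r(1)])
      fix w assume wD: "w \<in> D" and dw: "dist w0 w < r"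
      then have "w \<notin> S" using r(2) by auto
      then show "gr w0 - 1 < gr w" unfolding S_def using fin[OF wD] by simp
    qed
  qed
  have lb: "gr w0 - 1 - (2/r) * norm (w - w0) \<le> gr w" if wD: "w \<in> D" for w
  proof (cases "norm (w - w0) < r")
    case True
    then have "dist w0 w < r" by (simp add: dist_norm norm_minus_commute)
    then have "gr w0 - 1 < gr w" using rb wD by blast
    moreover have "0 \<le> (2/r) * norm (w - w0)" using r0 by simp
    ultimately show ?thesis by linarith
  next
    case False
    then have nr: "r \<le> norm (w - w0)" by simp
    have npos: "norm (w - w0) > 0" using r0 nr by linarith
    define t where "t = r / (2 * norm (w - w0))"
    have t0: "t > 0" unfolding t_def using r0 npos by simp
    have t1: "t \<le> 1" unfolding t_def using nr npos r0 by (simp add: field_simps)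
    define w' where "w' = (1-t) *\<^sub>R w0 + t *\<^sub>R w"
    have "w' - w0 = t *\<^sub>R (w - w0)" unfolding w'_def by (simp add: algebra_simps)
    then have "norm (w' - w0) = r/2" unfolding t_def using npos r0 by simp
    then have "dist w0 w' < r" using r0 by (simp add: dist_norm norm_minus_commute)
    moreover have w'D: "w' \<in> D" and w'le: "gr w' \<le> (1-t) * gr w0 + t * gr w"
      using conv_fin[OF cv pr w0 _ less_imp_le[OF t0] t1, of w] wD unfolding w'_def D_def gr_def by auto
    ultimately have "gr w0 - 1 < (1-t) * gr w0 + t * gr w" using rb by fastforce
    then have "t * gr w0 - 1 < t * gr w" by (simp add: algebra_simps)
    then have "gr w0 - 1/t < gr w" using t0 by (simp add: field_simps)
    moreover have "1/t = (2/r) * norm (w - w0)" unfolding t_def using r0 npos by simp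
    ultimately show ?thesis by linarith
  qed
  define M where "M = gr w0 - 1 - (2/r) * norm (x - w0) - 1/(c*r\<^sup>2)"
  have lbphi: "M \<le> \<phi> w" if wD: "w \<in> D" for w
  proof -
    have tri: "norm (w - w0) \<le> norm (x - w) + norm (x - w0)"
      using norm_triangle_ineq4[of "x - w0" "x - w"] by (simp add: norm_minus_commute)
    have amgm: "(2/r) * norm (x - w) \<le> c * (norm (x - w))\<^sup>2 + 1/(c*r\<^sup>2)"
    proof -
      have "c * (norm (x - w))\<^sup>2 + 1/(c*r\<^sup>2) - (2/r) * norm (x - w) = c * (norm (x - w) - 1/(c*r))\<^sup>2"
        using c0 r0 by (simp add: field_simps power2_eq_square)
      moreover have "c * (norm (x - w) - 1/(c*r))\<^sup>2 \<ge> 0" using c0 by simp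
      ultimately show ?thesis by linarith
    qed
    have "(2/r) * norm (w - w0) \<le> (2/r) * norm (x - w) + (2/r) * norm (x - w0)"
    proof -
      have "(2/r) * norm (w - w0) \<le> (2/r) * (norm (x - w) + norm (x - w0))"
        using tri r0 by (intro mult_left_mono) auto
      then show ?thesis by (simp only: distrib_left)
    qed
    then show ?thesis using lb[OF wD] amgm unfolding \<phi>_def M_def by linarith
  qed
  define m where "m = Inf (\<phi> ` D)"
  have Dne: "\<phi> ` D \<noteq> {}" using w0D by blast
  have bdd: "bdd_below (\<phi> ` D)" using lbphi by (intro bdd_belowI[of _ M]) auto
  have m_le: "m \<le> \<phi> w" if "w \<in> D" for w unfolding m_def using that bdd by (intro cInf_lower) auto
  have "\<forall>n. \<exists>w. w \<in> D \<and> \<phi> w < m + inverse (real (Suc n))"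
  proof
    fix n
    have "m < m + inverse (real (Suc n))" by simp
    then obtain y where "y \<in> \<phi> ` D" "y < m + inverse (real (Suc n))"
      using cInf_less_iff[OF Dne bdd] unfolding m_def by blast
    then show "\<exists>w. w \<in> D \<and> \<phi> w < m + inverse (real (Suc n))" by blast
  qed
  then obtain ws where wsD: "\<And>n. ws n \<in> D" and wsl: "\<And>n. \<phi> (ws n) < m + inverse (real (Suc n))"
    by metis
  have mid: "c/4 * (norm (u - v))\<^sup>2 \<le> (\<phi> u + \<phi> v)/2 - m" if "u \<in> D" "v \<in> D" for u v
  proof -
    have uv: "g u \<noteq> \<infinity>" "g v \<noteq> \<infinity>" using that unfolding D_def by auto
    have "(1/2) *\<^sub>R u + (1/2) *\<^sub>R v \<in> D" using mid_ineq(1)[OF cv pr uv] unfolding D_def by simp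
    then have "m \<le> \<phi> ((1/2) *\<^sub>R u + (1/2) *\<^sub>R v)" by (rule m_le)
    moreover have "\<phi> ((1/2) *\<^sub>R u + (1/2) *\<^sub>R v) \<le> (\<phi> u + \<phi> v)/2 - c/4 * (norm (u - v))\<^sup>2"
      using mid_ineq(2)[OF cv pr uv, of c x] unfolding \<phi>_def gr_def .
    ultimately show ?thesis by linarith
  qed
  have cauchy: "Cauchy ws"
    unfolding Cauchy_def
  proof (intro allI impI)
    fix e :: real assume e0: "e > 0"
    obtain N where N: "4/(c*e\<^sup>2) < real N" using reals_Archimedean2 by blast
    show "\<exists>M. \<forall>i\<ge>M. \<forall>j\<ge>M. dist (ws i) (ws j) < e"
    proof (intro exI allI impI)
      fix i j assume i: "i \<ge> N" and j: "j \<ge> N"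
      have ii: "inverse (real (Suc i)) \<le> inverse (real (Suc N))" using i by (simp add: field_simps)
      have jj: "inverse (real (Suc j)) \<le> inverse (real (Suc N))" using j by (simp add: field_simps)
      have "c/4 * (norm (ws i - ws j))\<^sup>2 \<le> (\<phi> (ws i) + \<phi> (ws j))/2 - m" by (rule mid[OF wsD wsD])
      also have "\<dots> < inverse (real (Suc N))" using wsl[of i] wsl[of j] ii jj by argo
      finally have "c/4 * (norm (ws i - ws j))\<^sup>2 < inverse (real (Suc N))" .
      then have h: "(norm (ws i - ws j))\<^sup>2 * (c * real (Suc N)) < 4" using c0 by (simp add: field_simps)
      have cN: "0 < c * real (Suc N)" using c0 by simp
      have "(norm (ws i - ws j))\<^sup>2 < 4/(c * real (Suc N))" using h cN by (simp only: pos_less_divide_eq)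
      also have "\<dots> < e\<^sup>2"
      proof -
        have ce: "0 < c*e\<^sup>2" using c0 e0 by simp
        have "4/(c*e\<^sup>2) < real (Suc N)" using N by simp
        then have "4 < real (Suc N) * (c*e\<^sup>2)" using ce by (simp only: pos_divide_less_eq)
        then have "4 < e\<^sup>2 * (c * real (Suc N))" by (simp only: ac_simps)
        then show ?thesis using cN by (simp only: pos_divide_less_eq)
      qed
      finally have "(norm (ws i - ws j))\<^sup>2 < e\<^sup>2" .
      then have "norm (ws i - ws j) < e" using e0 by (simp add: power2_less_imp_less less_imp_le)
      then show "dist (ws i) (ws j) < e" by (simp add: dist_norm)
    qed
  qed
  obtain p where lim: "ws \<longlonglongrightarrow> p" using Cauchy_convergent[OF cauchy] unfolding convergent_def by blast
  have approx: "p \<in> D \<and> \<phi> p \<le> m + 2*\<epsilon>" if e0: "\<epsilon> > 0" for \<epsilon>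
  proof -
    have t1: "(\<lambda>n. c * (norm (x - ws n))\<^sup>2) \<longlonglongrightarrow> c * (norm (x - p))\<^sup>2"
      by (intro tendsto_intros lim)
    have ev1: "eventually (\<lambda>n. c * (norm (x - p))\<^sup>2 - \<epsilon> < c * (norm (x - ws n))\<^sup>2) sequentially"
      using order_tendstoD(1)[OF t1] e0 by simp
    have ev2: "eventually (\<lambda>n. inverse (real (Suc n)) < \<epsilon>) sequentially"
      using order_tendstoD(2)[OF LIMSEQ_inverse_real_of_nat e0] .
    obtain N where N: "\<And>n. n \<ge> N \<Longrightarrow> c * (norm (x - p))\<^sup>2 - \<epsilon> < c * (norm (x - ws n))\<^sup>2 \<and> inverse (real (Suc n)) < \<epsilon>"
      using eventually_conj[OF ev1 ev2] unfolding eventually_sequentially by blast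
    define K where "K = m + 2*\<epsilon> - c * (norm (x - p))\<^sup>2"
    define S where "S = {w. g w \<le> ereal K}"
    have cS: "closed S" using lsc unfolding ext_lsc_def S_def by blast
    have inS: "ws (n + N) \<in> S" for n
    proof -
      have "gr (ws (n+N)) = \<phi> (ws (n+N)) - c * (norm (x - ws (n+N)))\<^sup>2" unfolding \<phi>_def by simp
      also have "\<dots> < K" using wsl[of "n+N"] N[of "n+N"] unfolding K_def by simp
      finally have "gr (ws (n+N)) < K" .
      then show ?thesis unfolding S_def using fin[OF wsD[of "n+N"]] by simp
    qed
    have "(\<lambda>n. ws (n + N)) \<longlonglongrightarrow> p" using LIMSEQ_ignore_initial_segment[OF lim] .
    then have "p \<in> S" by (rule closed_sequentially[OF cS, rotated]) (rule inS)
    then have gp: "g p \<le> ereal K" unfolding S_def by simp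
    then have pD: "p \<in> D" unfolding D_def by auto
    then have "gr p \<le> K" using gp fin[OF pD] by simp
    then show ?thesis using pD unfolding \<phi>_def K_def by simp
  qed
  have pD: "p \<in> D" using approx[of 1] by simp
  have pm: "\<phi> p \<le> m"
  proof (rule field_le_epsilon)
    fix e :: real assume "e > 0"
    then show "\<phi> p \<le> m + e" using approx[of "e/2"] by simp
  qed
  show ?thesis
  proof (intro exI conjI allI)
    show "g p \<noteq> \<infinity>" using pD unfolding D_def by simp
    fix w
    show "g p + ereal (c * (norm (x - p))\<^sup>2) \<le> g w + ereal (c * (norm (x - w))\<^sup>2)"
    proof (cases "w \<in> D")
      case True
      have "g p + ereal (c * (norm (x - p))\<^sup>2) = ereal (\<phi> p)" unfolding \<phi>_def using fin[OF pD] by simp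
      also have "\<dots> \<le> ereal (\<phi> w)" using pm m_le[OF True] by simp
      also have "\<dots> = g w + ereal (c * (norm (x - w))\<^sup>2)" unfolding \<phi>_def using fin[OF True] by simp
      finally show ?thesis .
    next
      case False
      then show ?thesis unfolding D_def by simp
    qed
  qed
qed


lemma prox_char:
  fixes g :: "'a::{real_inner,complete_space} \<Rightarrow> ereal"
  assumes cv: "ext_convex g" and pr: "ext_proper g" and lsc: "ext_lsc g" and g0: "\<gamma> > 0"
  shows "g (prox \<gamma> g x) \<noteq> \<infinity>"
    and "\<And>w. g (prox \<gamma> g x) + ereal (1/(2*\<gamma>) * (norm (x - prox \<gamma> g x))\<^sup>2) \<le> g w + ereal (1/(2*\<gamma>) * (norm (x - w))\<^sup>2)"
proof -
  define c where "c = 1/(2*\<gamma>)"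
  have c0: "c > 0" unfolding c_def using g0 by simp
  obtain p where gp: "g p \<noteq> \<infinity>" and pmin: "\<And>w. g p + ereal (c * (norm (x - p))\<^sup>2) \<le> g w + ereal (c * (norm (x - w))\<^sup>2)"
    using prox_exists[OF cv pr lsc c0, of x] by blast
  define gr where "gr = (\<lambda>w. real_of_ereal (g w))"
  have fin: "\<And>w. g w \<noteq> \<infinity> \<Longrightarrow> g w = ereal (gr w)" using proper_fin[OF pr] unfolding gr_def by auto
  have uniq: "z = p" if zmin: "\<forall>w. g z + ereal (c * (norm (x - z))\<^sup>2) \<le> g w + ereal (c * (norm (x - w))\<^sup>2)" for z
  proof -
    have "g z + ereal (c * (norm (x - z))\<^sup>2) \<le> g p + ereal (c * (norm (x - p))\<^sup>2)" using zmin by blast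
    also have "\<dots> < \<infinity>" using fin[OF gp] by simp
    finally have gz: "g z \<noteq> \<infinity>" by auto
    define mp where "mp = (1/2) *\<^sub>R z + (1/2) *\<^sub>R p"
    have gmp: "g mp \<noteq> \<infinity>" unfolding mp_def by (rule mid_ineq(1)[OF cv pr gz gp])
    have m2: "gr mp + c * (norm (x - mp))\<^sup>2 \<le> ((gr z + c * (norm (x - z))\<^sup>2) + (gr p + c * (norm (x - p))\<^sup>2))/2 - c/4 * (norm (z - p))\<^sup>2"
      unfolding mp_def gr_def by (rule mid_ineq(2)[OF cv pr gz gp])
    have "ereal (gr p + c * (norm (x - p))\<^sup>2) \<le> ereal (gr mp + c * (norm (x - mp))\<^sup>2)"
      using pmin[of mp] fin[OF gp] fin[OF gmp] by simp
    then have m1: "gr p + c * (norm (x - p))\<^sup>2 \<le> gr mp + c * (norm (x - mp))\<^sup>2" by simp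
    have "ereal (gr z + c * (norm (x - z))\<^sup>2) \<le> ereal (gr p + c * (norm (x - p))\<^sup>2)"
      using zmin fin[OF gp] fin[OF gz] by (metis plus_ereal.simps(1))
    then have m3: "gr z + c * (norm (x - z))\<^sup>2 \<le> gr p + c * (norm (x - p))\<^sup>2" by simp
    have "c/4 * (norm (z - p))\<^sup>2 \<le> 0" using m1 m2 m3 by argo
    then have "(norm (z - p))\<^sup>2 \<le> 0" using c0 by (simp add: mult_le_0_iff)
    then show ?thesis by simp
  qed
  have pe: "prox \<gamma> g x = p"
    unfolding prox_def c_def[symmetric]
    by (rule the_equality) (use pmin uniq in auto)
  show "g (prox \<gamma> g x) \<noteq> \<infinity>" unfolding pe by (rule gp)
  fix w show "g (prox \<gamma> g x) + ereal (1/(2*\<gamma>) * (norm (x - prox \<gamma> g x))\<^sup>2) \<le> g w + ereal (1/(2*\<gamma>) * (norm (x - w))\<^sup>2)"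
    unfolding pe c_def[symmetric] by (rule pmin)
qed

lemma prox_subgrad:
  fixes g :: "'a::{real_inner,complete_space} \<Rightarrow> ereal"
  assumes cv: "ext_convex g" and pr: "ext_proper g" and lsc: "ext_lsc g" and g0: "\<gamma> > 0"
    and p: "p = prox \<gamma> g x"
  shows "g p + ereal (inner ((1/\<gamma>) *\<^sub>R (x - p)) (w - p)) \<le> g w"
proof (cases "g w = \<infinity>")
  case True
  then show ?thesis by simp
next
  case False
  define c where "c = 1/(2*\<gamma>)"
  have c0: "c > 0" unfolding c_def using g0 by simp
  have gp: "g p \<noteq> \<infinity>" unfolding p by (rule prox_char(1)[OF cv pr lsc g0])
  have pmin: "\<And>w. g p + ereal (c * (norm (x - p))\<^sup>2) \<le> g w + ereal (c * (norm (x - w))\<^sup>2)"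
    unfolding p c_def by (rule prox_char(2)[OF cv pr lsc g0])
  define gr where "gr = (\<lambda>w. real_of_ereal (g w))"
  have fin: "\<And>w. g w \<noteq> \<infinity> \<Longrightarrow> g w = ereal (gr w)" using proper_fin[OF pr] unfolding gr_def by auto
  have key: "gr p + 2*c * inner (x - p) (w - p) - t * (c * (norm (w - p))\<^sup>2) \<le> gr w"
    if t: "0 < t" "t \<le> 1" for t
  proof -
    define wt where "wt = (1-t) *\<^sub>R p + t *\<^sub>R w"
    have gwt: "g wt \<noteq> \<infinity>" and wtle: "gr wt \<le> (1-t) * gr p + t * gr w"
      using conv_fin[OF cv pr gp False, of t] t unfolding wt_def gr_def by auto
    have "ereal (gr p + c * (norm (x - p))\<^sup>2) \<le> ereal (gr wt + c * (norm (x - wt))\<^sup>2)"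
      using pmin[of wt] fin[OF gp] fin[OF gwt] by simp
    then have m: "gr p + c * (norm (x - p))\<^sup>2 \<le> gr wt + c * (norm (x - wt))\<^sup>2" by simp
    have e: "x - wt = (x - p) - t *\<^sub>R (w - p)" unfolding wt_def by (simp add: algebra_simps)
    have nw: "(norm (x - wt))\<^sup>2 = (norm (x - p))\<^sup>2 - 2*t * inner (x - p) (w - p) + t\<^sup>2 * (norm (w - p))\<^sup>2"
      unfolding e power2_norm_eq_inner
      by (simp add: inner_diff_left inner_diff_right inner_commute algebra_simps power2_eq_square)
    have "t * (gr p + 2*c * inner (x - p) (w - p) - t * (c * (norm (w - p))\<^sup>2)) \<le> t * gr w"
      using m wtle unfolding nw by (simp add: algebra_simps power2_eq_square)
    then show ?thesis using t by simp
  qed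
  have "gr p + 2*c * inner (x - p) (w - p) \<le> gr w"
    by (rule lim0[of "gr p + 2*c * inner (x - p) (w - p)" "c * (norm (w - p))\<^sup>2" "gr w"]) (rule key)
  moreover have "2*c * inner (x - p) (w - p) = inner ((1/\<gamma>) *\<^sub>R (x - p)) (w - p)" unfolding c_def by simp
  ultimately show ?thesis using fin[OF gp] fin[OF False] by simp
qed


lemma xs_subgrad:
  fixes f :: "'a::real_inner \<Rightarrow> real" and g :: "'a \<Rightarrow> ereal"
  assumes grad: "\<And>x. GDERIV f x :> gf x" and lip: "L-lipschitz_on UNIV gf"
    and cv: "ext_convex g" and pr: "ext_proper g"
    and opt: "\<And>x. ereal (f xs) + g xs \<le> ereal (f x) + g x"
  shows "g xs \<noteq> \<infinity>" and "g xs + ereal (inner (- gf xs) (w - xs)) \<le> g w"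
proof -
  obtain w0 where w0: "g w0 \<noteq> \<infinity>" using pr unfolding ext_proper_def by blast
  define gr where "gr = (\<lambda>w. real_of_ereal (g w))"
  have fin: "\<And>w. g w \<noteq> \<infinity> \<Longrightarrow> g w = ereal (gr w)" using proper_fin[OF pr] unfolding gr_def by auto
  have "ereal (f xs) + g xs \<le> ereal (f w0) + g w0" by (rule opt)
  also have "\<dots> < \<infinity>" using fin[OF w0] by simp
  finally show gxs: "g xs \<noteq> \<infinity>" by auto
  show "g xs + ereal (inner (- gf xs) (w - xs)) \<le> g w"
  proof (cases "g w = \<infinity>")
    case True then show ?thesis by simp
  next
    case False
    have key: "gr xs + inner (- gf xs) (w - xs) - t * (L/2 * (norm (w - xs))\<^sup>2) \<le> gr w"
      if t: "0 < t" "t \<le> 1" for t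
    proof -
      define wt where "wt = (1-t) *\<^sub>R xs + t *\<^sub>R w"
      have gwt: "g wt \<noteq> \<infinity>" and wtle: "gr wt \<le> (1-t) * gr xs + t * gr w"
        using conv_fin[OF cv pr gxs False, of t] t unfolding wt_def gr_def by auto
      have "ereal (f xs + gr xs) \<le> ereal (f wt + gr wt)"
        using opt[of wt] fin[OF gxs] fin[OF gwt] by simp
      then have m: "f xs + gr xs \<le> f wt + gr wt" by simp
      have e: "wt - xs = t *\<^sub>R (w - xs)" unfolding wt_def by (simp add: algebra_simps)
      have D: "f wt \<le> f xs + inner (gf xs) (wt - xs) + L/2 * (norm (wt - xs))\<^sup>2"
        by (rule descent[OF grad lip])
      have nt: "(norm (wt - xs))\<^sup>2 = t\<^sup>2 * (norm (w - xs))\<^sup>2" unfolding e using t by (simp add: power_mult_distrib)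
      have it: "inner (gf xs) (wt - xs) = t * inner (gf xs) (w - xs)" unfolding e by simp
      have D': "f wt \<le> f xs + t * inner (gf xs) (w - xs) + L/2 * (t\<^sup>2 * (norm (w - xs))\<^sup>2)"
        using D unfolding nt it .
      have "t * (gr xs + inner (- gf xs) (w - xs) - t * (L/2 * (norm (w - xs))\<^sup>2)) \<le> t * gr w"
        using m wtle D' by (simp add: algebra_simps power2_eq_square)
      then show ?thesis using t by simp
    qed
    have "gr xs + inner (- gf xs) (w - xs) \<le> gr w"
      by (rule lim0[of _ "L/2 * (norm (w - xs))\<^sup>2"]) (rule key)
    then show ?thesis using fin[OF gxs] fin[OF False] by simp
  qed
qed

lemma item_Suc:
  "itemX L \<mu> gf g x0 (Suc k) = itemY L \<mu> gf g x0 k - (1/L) *\<^sub>R gf (itemY L \<mu> gf g x0 k)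
      - (1 / itemDelta (\<mu>/L) k) *\<^sub>R (itemZbar L \<mu> gf g x0 k - itemZ L \<mu> gf g x0 (Suc k))"
  "itemZ L \<mu> gf g x0 (Suc k) = prox (itemDelta (\<mu>/L) k / L) g (itemZbar L \<mu> gf g x0 k)"
  by (simp_all add: itemX_def itemZ_def itemY_def itemZbar_def Let_def split: prod.splits)

lemma itemA_nonneg: "0 < q \<Longrightarrow> q < 1 \<Longrightarrow> 0 \<le> itemA q k"
proof (induction k)
  case 0 then show ?case by simp
next
  case (Suc k)
  have "0 \<le> (1 + q) * itemA q k + 2 * (1 + sqrt ((1 + itemA q k) * (1 + q * itemA q k)))"
    using Suc by (intro add_nonneg_nonneg mult_nonneg_nonneg) auto
  then show ?case by simp
qed


lemma itemV_eq:
  fixes g :: "'a::real_inner \<Rightarrow> ereal"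
  assumes gxs: "g xs \<noteq> \<infinity>" and pr: "ext_proper g"
    and h: "g (itemZ L \<mu> gf g x0 k) \<noteq> \<infinity> \<or> (itemA (\<mu>/L) k = 0 \<and> itemSigma (\<mu>/L) k = 1)"
  shows "itemV L \<mu> f gf g x0 xs k = ereal (Vr L \<mu> f gf (\<lambda>w. real_of_ereal (g w)) xs (itemA (\<mu>/L) k)
           (itemSigma (\<mu>/L) k) (itemY L \<mu> gf g x0 (k-1)) (itemZ L \<mu> gf g x0 k) (itemS L \<mu> gf g x0 k))"
  using h
proof
  assume gz: "g (itemZ L \<mu> gf g x0 k) \<noteq> \<infinity>"
  show ?thesis
  proof -
    define rz where "rz = real_of_ereal (g (itemZ L \<mu> gf g x0 k))"
    define rx where "rx = real_of_ereal (g xs)"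
    have ez: "g (itemZ L \<mu> gf g x0 k) = ereal rz" unfolding rz_def by (rule proper_fin[OF pr gz])
    have ex: "g xs = ereal rx" unfolding rx_def by (rule proper_fin[OF pr gxs])
    show ?thesis
      unfolding itemV_def Let_def Vr_def Igr_def Ig_def ez ex by simp
  qed
next
  assume z: "itemA (\<mu>/L) k = 0 \<and> itemSigma (\<mu>/L) k = 1"
  show ?thesis
    unfolding itemV_def Let_def Vr_def Igr_def using z by (simp add: zero_ereal_def[symmetric])
qed

theorem lemma2:
  fixes f :: "'a::{real_inner, complete_space} \<Rightarrow> real"
    and gf :: "'a \<Rightarrow> 'a"
    and g :: "'a \<Rightarrow> ereal"
    and \<mu> L :: real
    and x0 xs :: 'a
  assumes "0 < \<mu>" and "\<mu> < L"
    and "\<And>x. GDERIV f x :> gf x"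
    and "strongly_convex \<mu> f"
    and "L-lipschitz_on UNIV gf"
    and "ext_convex g" and "ext_proper g" and "ext_lsc g"
    and "\<And>x. ereal (f xs) + g xs \<le> ereal (f x) + g x"
  shows "itemV L \<mu> f gf g x0 xs (Suc k) \<le> itemV L \<mu> f gf g x0 xs k"
proof -
  note mu0 = assms(1) and muL = assms(2) and grad = assms(3) and sc = assms(4) and lip = assms(5)
    and cv = assms(6) and pr = assms(7) and lsc = assms(8) and opt = assms(9)
  define q where "q = \<mu>/L"
  have L0: "L > 0" using mu0 muL by simp
  have q0: "0 < q" unfolding q_def using mu0 L0 by simp
  have q1: "q < 1" unfolding q_def using muL L0 by simp
  have mu: "\<mu> = q*L" unfolding q_def using L0 by simp
  define gr where "gr = (\<lambda>w. real_of_ereal (g w))"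
  have fin: "\<And>w. g w \<noteq> \<infinity> \<Longrightarrow> g w = ereal (gr w)" using proper_fin[OF pr] unfolding gr_def by auto
  define Zf where "Zf = itemZ L \<mu> gf g x0"
  define Yf where "Yf = itemY L \<mu> gf g x0"
  define Sf where "Sf = itemS L \<mu> gf g x0"
  define ZBf where "ZBf = itemZbar L \<mu> gf g x0"
  define Xf where "Xf = itemX L \<mu> gf g x0"
  have scalk: "itemBeta q j * (1-q) * itemA q (Suc j) = itemA q j
     \<and> (itemSigma q j - 1) * itemDelta q j = itemA q j
     \<and> itemA q (Suc j) = (1 + q * itemA q (Suc j)) * (itemDelta q j)\<^sup>2
     \<and> (1+q) * itemA q (Suc j) - itemA q j = 2*(1 + q * itemA q (Suc j)) * itemDelta q j
     \<and> itemA q (Suc j) * (1-q) * (1 - itemBeta q j) = 2*(1 + q * itemA q (Suc j)) * (1 - q * itemDelta q j) * itemDelta q j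
     \<and> 1 + q * itemA q j = (1 + q * itemA q (Suc j)) * (1 - q * itemDelta q j)\<^sup>2
     \<and> itemA q j \<le> itemA q (Suc j) \<and> 1 \<le> itemSigma q j \<and> 0 < itemDelta q j \<and> 0 < itemA q (Suc j)" for j
  proof -
    have a0: "0 \<le> itemA q j" by (rule itemA_nonneg[OF q0 q1])
    have sgd: "itemSigma q j = sqrt ((1 + itemA q j) * (1 + q * itemA q j))" unfolding itemSigma_def ..
    have bd: "itemA q (Suc j) = ((1+q) * itemA q j + 2*(1 + itemSigma q j))/(1-q)\<^sup>2"
      unfolding itemSigma_def by simp
    have dd: "itemDelta q j = sqrt (itemA q (Suc j) / (1 + q * itemA q (Suc j)))" unfolding itemDelta_def ..
    have bed: "itemBeta q j = itemA q j / ((1-q) * itemA q (Suc j))" unfolding itemBeta_def ..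
    show ?thesis using scal[OF q0 q1 a0 sgd bd dd bed] by blast
  qed
  define a where "a = itemA q k"
  define b where "b = itemA q (Suc k)"
  define sg where "sg = itemSigma q k"
  define sg' where "sg' = itemSigma q (Suc k)"
  define d where "d = itemDelta q k"
  define be where "be = itemBeta q k"
  have r0: "be*(1-q)*b = a" and r1: "(sg - 1) * d = a" and r2: "b = (1 + q*b) * d\<^sup>2"
    and r3: "(1+q)*b - a = 2*(1+q*b)*d" and r4: "b*(1-q)*(1-be) = 2*(1+q*b)*(1-q*d)*d"
    and r5: "1 + q*a = (1+q*b)*(1-q*d)\<^sup>2" and ab: "a \<le> b" and sg1: "1 \<le> sg" and d0: "0 < d"
    using scalk[of k] unfolding a_def b_def sg_def d_def be_def by blast+
  have a0: "0 \<le> a" unfolding a_def by (rule itemA_nonneg[OF q0 q1])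
  have sgsg': "sg \<le> sg'"
  proof -
    have "(1 + a) * (1 + q*a) \<le> (1 + b) * (1 + q*b)"
      using ab a0 q0 by (intro mult_mono) (auto intro: mult_left_mono)
    then show ?thesis unfolding sg_def sg'_def itemSigma_def a_def b_def by simp
  qed
  have gxs: "g xs \<noteq> \<infinity>" by (rule xs_subgrad(1)[OF grad lip cv pr opt])
  have zpe: "Zf (Suc k) = prox (d/L) g (ZBf k)" unfolding Zf_def ZBf_def d_def q_def by (rule item_Suc(2))
  have spe: "Sf (Suc k) = (1/(d/L)) *\<^sub>R (ZBf k - Zf (Suc k))"
    unfolding Sf_def itemS_def ZBf_def Zf_def d_def q_def by simp
  have gam: "d/L > 0" using d0 L0 by simp
  have gzp: "g (Zf (Suc k)) \<noteq> \<infinity>" unfolding zpe by (rule prox_char(1)[OF cv pr lsc gam])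
  have subzp: "g (Zf (Suc k)) + ereal (inner (Sf (Suc k)) (w - Zf (Suc k))) \<le> g w" for w
    unfolding spe by (rule prox_subgrad[OF cv pr lsc gam zpe])
  have yrel: "Yf k = (1-be) *\<^sub>R Zf k + be *\<^sub>R (Yf (k-1) - (1/L) *\<^sub>R (gf (Yf (k-1)) + Sf k))"
  proof (cases k)
    case 0
    have "itemBeta (\<mu>/L) 0 = 0" unfolding itemBeta_def by simp
    moreover have "be = 0" unfolding be_def 0 itemBeta_def by simp
    ultimately show ?thesis unfolding Yf_def Zf_def itemY_def 0 by simp
  next
    case (Suc j)
    have x: "Xf (Suc j) = Yf j - (1/L) *\<^sub>R (gf (Yf j) + Sf (Suc j))"
    proof -
      have "(1/L) *\<^sub>R Sf (Suc j) = (1 / itemDelta (\<mu>/L) j) *\<^sub>R (ZBf j - Zf (Suc j))"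
        unfolding Sf_def itemS_def ZBf_def Zf_def using L0 by simp
      then show ?thesis unfolding Xf_def Yf_def item_Suc(1) ZBf_def[symmetric] Zf_def[symmetric]
        by (simp add: algebra_simps)
    qed
    have yS: "Yf (Suc j) = (1 - be) *\<^sub>R Zf (Suc j) + be *\<^sub>R Xf (Suc j)"
      unfolding Yf_def Zf_def Xf_def itemY_def be_def q_def Suc ..
    show ?thesis unfolding Suc using yS x by simp
  qed
  have zprel: "Zf (Suc k) = (1-q*d) *\<^sub>R Zf k + (q*d) *\<^sub>R Yf k - (d/L) *\<^sub>R gf (Yf k) - (d/L) *\<^sub>R Sf (Suc k)"
  proof -
    have "(d/L) *\<^sub>R Sf (Suc k) = ZBf k - Zf (Suc k)" unfolding spe using d0 L0 by simp
    moreover have "ZBf k = (1-q*d) *\<^sub>R Zf k + (q*d) *\<^sub>R Yf k - (d/L) *\<^sub>R gf (Yf k)"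
      unfolding ZBf_def itemZbar_def Let_def Zf_def Yf_def d_def q_def ..
    ultimately show ?thesis by (simp add: algebra_simps)
  qed
  have E: "Vr L \<mu> f gf gr xs a sg (Yf (k-1)) (Zf k) (Sf k) - Vr L \<mu> f gf gr xs b sg' (Yf k) (Zf (Suc k)) (Sf (Suc k)) =
     (1-q)*a*If L \<mu> f gf (Yf (k-1)) (Yf k) + (1-q)*(b-a)*If L \<mu> f gf xs (Yf k) + (sg-1)*Igr gr (Zf (Suc k)) (Zf k) (Sf k)
     + (b-a+sg'-sg)*Igr gr (Zf (Suc k)) xs (- gf xs) + (b-a)*Igr gr xs (Zf (Suc k)) (Sf (Suc k))
     + (b-a)/(2*L)*(norm (Sf (Suc k) + gf xs))\<^sup>2 + a/(2*L)*(norm (Sf k - Sf (Suc k)))\<^sup>2"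
    by (rule step_eq[OF L0 q0 q1 mu r0 r1 r2 r3 r4 r5 yrel zprel])
  have T1: "0 \<le> If L \<mu> f gf (Yf (k-1)) (Yf k)" by (rule If_nonneg[OF mu0 muL grad sc lip])
  have T2: "0 \<le> If L \<mu> f gf xs (Yf k)" by (rule If_nonneg[OF mu0 muL grad sc lip])
  have T3: "0 \<le> (sg-1)*Igr gr (Zf (Suc k)) (Zf k) (Sf k)"
  proof (cases k)
    case 0
    have "sg = 1" unfolding sg_def 0 itemSigma_def by simp
    then show ?thesis by simp
  next
    case (Suc j)
    have dj: "0 < itemDelta q j" using scalk[of j] by blast
    have gamj: "itemDelta q j / L > 0" using dj L0 by simp
    have ze: "Zf k = prox (itemDelta q j / L) g (ZBf j)" unfolding Suc Zf_def ZBf_def q_def by (rule item_Suc(2))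
    have se: "Sf k = (1/(itemDelta q j / L)) *\<^sub>R (ZBf j - Zf k)"
      unfolding Suc Sf_def itemS_def ZBf_def Zf_def q_def by simp
    have gz: "g (Zf k) \<noteq> \<infinity>" unfolding ze by (rule prox_char(1)[OF cv pr lsc gamj])
    have "g (Zf k) + ereal (inner (Sf k) (Zf (Suc k) - Zf k)) \<le> g (Zf (Suc k))"
      unfolding se by (rule prox_subgrad[OF cv pr lsc gamj ze])
    then have "0 \<le> Igr gr (Zf (Suc k)) (Zf k) (Sf k)"
      unfolding Igr_def using fin[OF gz] fin[OF gzp] by simp
    then show ?thesis using sg1 by simp
  qed
  have T4: "0 \<le> Igr gr (Zf (Suc k)) xs (- gf xs)"
  proof -
    have "g xs + ereal (inner (- gf xs) (Zf (Suc k) - xs)) \<le> g (Zf (Suc k))"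
      by (rule xs_subgrad(2)[OF grad lip cv pr opt])
    then show ?thesis unfolding Igr_def using fin[OF gxs] fin[OF gzp] by simp
  qed
  have T5: "0 \<le> Igr gr xs (Zf (Suc k)) (Sf (Suc k))"
  proof -
    have "g (Zf (Suc k)) + ereal (inner (Sf (Suc k)) (xs - Zf (Suc k))) \<le> g xs" by (rule subzp)
    then show ?thesis unfolding Igr_def using fin[OF gxs] fin[OF gzp] by simp
  qed
  have c1: "0 \<le> (1-q)*a" using q1 a0 by simp
  have c2: "0 \<le> (1-q)*(b-a)" using q1 ab by simp
  have c4: "0 \<le> b-a+sg'-sg" using ab sgsg' by simp
  have c5: "0 \<le> b-a" using ab by simp
  have "0 \<le> (1-q)*a*If L \<mu> f gf (Yf (k-1)) (Yf k) + (1-q)*(b-a)*If L \<mu> f gf xs (Yf k) + (sg-1)*Igr gr (Zf (Suc k)) (Zf k) (Sf k)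
     + (b-a+sg'-sg)*Igr gr (Zf (Suc k)) xs (- gf xs) + (b-a)*Igr gr xs (Zf (Suc k)) (Sf (Suc k))
     + (b-a)/(2*L)*(norm (Sf (Suc k) + gf xs))\<^sup>2 + a/(2*L)*(norm (Sf k - Sf (Suc k)))\<^sup>2"
  proof -
    have P1: "0 \<le> (1-q)*a*If L \<mu> f gf (Yf (k-1)) (Yf k)" by (rule mult_nonneg_nonneg[OF c1 T1])
    have P2: "0 \<le> (1-q)*(b-a)*If L \<mu> f gf xs (Yf k)" by (rule mult_nonneg_nonneg[OF c2 T2])
    have P4: "0 \<le> (b-a+sg'-sg)*Igr gr (Zf (Suc k)) xs (- gf xs)" by (rule mult_nonneg_nonneg[OF c4 T4])
    have P5: "0 \<le> (b-a)*Igr gr xs (Zf (Suc k)) (Sf (Suc k))" by (rule mult_nonneg_nonneg[OF c5 T5])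
    have P6: "0 \<le> (b-a)/(2*L)*(norm (Sf (Suc k) + gf xs))\<^sup>2" using c5 L0 by simp
    have P7: "0 \<le> a/(2*L)*(norm (Sf k - Sf (Suc k)))\<^sup>2" using a0 L0 by simp
    show ?thesis using P1 P2 T3 P4 P5 P6 P7 by linarith
  qed
  then have le: "Vr L \<mu> f gf gr xs b sg' (Yf k) (Zf (Suc k)) (Sf (Suc k)) \<le> Vr L \<mu> f gf gr xs a sg (Yf (k-1)) (Zf k) (Sf k)"
    using E by linarith
  have V1: "itemV L \<mu> f gf g x0 xs (Suc k) = ereal (Vr L \<mu> f gf gr xs b sg' (Yf k) (Zf (Suc k)) (Sf (Suc k)))"
    unfolding gr_def b_def sg'_def Yf_def Zf_def Sf_def q_def
    using itemV_eq[OF gxs pr, of L \<mu> gf x0 "Suc k" f] gzp unfolding Zf_def by simp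
  have V0: "itemV L \<mu> f gf g x0 xs k = ereal (Vr L \<mu> f gf gr xs a sg (Yf (k-1)) (Zf k) (Sf k))"
  proof (cases k)
    case 0
    have "itemA (\<mu>/L) k = 0 \<and> itemSigma (\<mu>/L) k = 1" unfolding 0 itemSigma_def by simp
    then show ?thesis
      unfolding gr_def a_def sg_def Yf_def Zf_def Sf_def q_def
      using itemV_eq[OF gxs pr, of L \<mu> gf x0 k f] by simp
  next
    case (Suc j)
    have dj: "0 < itemDelta q j" using scalk[of j] by blast
    have gamj: "itemDelta q j / L > 0" using dj L0 by simp
    have ze: "Zf k = prox (itemDelta q j / L) g (ZBf j)" unfolding Suc Zf_def ZBf_def q_def by (rule item_Suc(2))
    have gz: "g (Zf k) \<noteq> \<infinity>" unfolding ze by (rule prox_char(1)[OF cv pr lsc gamj])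
    then show ?thesis
      unfolding gr_def a_def sg_def Yf_def Zf_def Sf_def q_def
      using itemV_eq[OF gxs pr, of L \<mu> gf x0 k f] unfolding Zf_def by simp
  qed
  show ?thesis unfolding V0 V1 using le by simp
qed

end
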